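(* Let $p$ be a prime, $m\ge 1$ and $r$ integers with $r^p\equiv 1 \pmod m$, and let $G=\langle x, y\mid x^p=y^m=1,\ x^{-1}yx=y^r\rangle$ (so $G\cong C_p\ltimes C_m$, $|G|=pm$), where $p$ is the smallest prime divisor of $|G|$ and $\gcd(p(r-1), m)=1$. Let $N=\langle y\rangle$, let $M$ be any subgroup of $N$, let $u\in N$, and let $0\le s<s'\le p-1$ be integers. Then: (i) if $u^{r^s}\in M$, then $\{u, u^{r},\ldots, u^{r^{p-1}}\}\subseteq M$; (ii) if $u^{r^s}$ and $u^{r^{s'}}$ lie in the same coset of $M$, then $\{u, u^{r},\ldots, u^{r^{p-1}}\}\subseteq M$; (iii) if $u\neq 1$, then $u^{r^s}\neq u^{r^{s'}}$. *)

theory Defs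
  imports "HOL-Algebra.Algebra" "HOL-Number_Theory.Number_Theory"
begin

end

theory Submission
  imports Defs
begin

lemma nt_coprime:
  fixes p t m :: nat and r :: int
  assumes "Factorial_Ring.prime p" "0 < t" "t < p" "[r ^ p = 1] (mod int m)" "coprime (r - 1) (int m)"
  shows "coprime (r ^ t - 1) (int m)"
proof -
  define d where "d = gcd (r ^ t - 1) (int m)"
  have dm: "d dvd int m" and dt: "d dvd r ^ t - 1" unfolding d_def by auto
  have c1: "[r ^ t = 1] (mod d)" using dt by (simp add: cong_iff_dvd_diff)
  have c2: "[r ^ p = 1] (mod d)" using assms(4) dm cong_dvd_modulus by blast
  have "coprime t p" using assms(1-3)
    by (metis coprime_commute nat_dvd_not_less prime_imp_coprime)
  then obtain a b where ab: "t * a = p * b + 1"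
    using bezout_nat[of t p] assms(2) by auto
  have "[r ^ (t * a) = 1] (mod d)"
    using cong_pow[OF c1, of a] by (simp add: power_mult)
  moreover have "[r ^ (p * b + 1) = r] (mod d)"
    using cong_mult[OF cong_pow[OF c2, of b] cong_refl[of r]]
    by (simp only: power_add power_mult power_one_right power_one mult_1)
  ultimately have "[r = 1] (mod d)" using ab
    by (metis cong_sym cong_trans)
  then have "d dvd r - 1" by (simp add: cong_iff_dvd_diff)
  with dm have "d dvd gcd (r - 1) (int m)" by simp
  with assms(5) have "d dvd 1" by simp
  moreover have "d \<ge> 0" unfolding d_def by simp
  ultimately have "d = 1" by simp
  then show ?thesis unfolding d_def by (simp add: coprime_iff_gcd_eq_1)
qed

lemma key:
  fixes G (structure)
  assumes "group G" "u \<in> carrier G" "u [^]\<^bsub>G\<^esub> (m::nat) = \<one>\<^bsub>G\<^esub>"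
    "coprime c (int m)" "subgroup H G" "u [^]\<^bsub>G\<^esub> (c::int) \<in> H"
  shows "u \<in> H"
proof -
  interpret group G by fact
  obtain e where "[c * e = 1] (mod int m)" using cong_solve_coprime_int assms(4) by blast
  then obtain k where k: "c * e = 1 + int m * k"
    by (metis cong_iff_dvd_diff dvd_def eq_diff_eq add.commute)
  have "(u [^] c) [^] e \<in> H" using subgroup_int_pow_closed[OF assms(5,6)] .
  also have "(u [^] c) [^] e = u [^] (1 + int m * k)"
    using int_pow_pow[OF assms(2)] k by simp
  also have "\<dots> = u" using assms(2,3)
    by (simp add: int_pow_mult int_pow_pow[symmetric] int_pow_int)
  finally show ?thesis .
qed

theorem lemma3p1:
  fixes G (structure) and p m :: nat and r :: int and x y u :: 'a
    and M :: "'a set" and s s' :: nat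
  assumes "group G"
    and "Factorial_Ring.prime p" and "m \<ge> 1" and "[r ^ p = 1] (mod int m)"
    and "x \<in> carrier G" and "y \<in> carrier G"
    and "carrier G = generate G {x, y}"
    and "x [^] p = \<one>" and "y [^] m = \<one>"
    and "inv x \<otimes> y \<otimes> x = y [^] r"
    and "order G = p * m"
    and "\<forall>q::nat. Factorial_Ring.prime q \<and> q dvd order G \<longrightarrow> p \<le> q"
    and "gcd (int p * (r - 1)) (int m) = 1"
    and "subgroup M G" and "M \<subseteq> generate G {y}"
    and "u \<in> generate G {y}"
    and "s < s'" and "s' \<le> p - 1"
  shows "(u [^] (r ^ s) \<in> M \<longrightarrow> {u [^] (r ^ k) | k. k \<le> p - 1} \<subseteq> M)
       \<and> (M #> (u [^] (r ^ s)) = M #> (u [^] (r ^ s'))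
            \<longrightarrow> {u [^] (r ^ k) | k. k \<le> p - 1} \<subseteq> M)
       \<and> (u \<noteq> \<one> \<longrightarrow> u [^] (r ^ s) \<noteq> u [^] (r ^ s'))"
proof -
  interpret group G by fact
  have ucar: "u \<in> carrier G"
    using assms(16) generate_incl[of "{y}"] assms(6) by auto
  obtain n where un: "u = y [^] (n::int)" using assms(16) generate_pow[OF assms(6)] by auto
  have um: "u [^] m = \<one>"
  proof -
    have "u [^] m = u [^] (int m)" by (simp add: int_pow_int)
    also have "\<dots> = y [^] (int m * n)" unfolding un using int_pow_pow[OF assms(6)]
      by (simp add: mult.commute)
    also have "\<dots> = (y [^] (int m)) [^] n" using int_pow_pow[OF assms(6)] by simp
    also have "\<dots> = \<one>" using assms(9) by (simp add: int_pow_int)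
    finally show ?thesis .
  qed
  have pp: "p > 0" using assms(2) prime_gt_0_nat by blast
  have "coprime (1::int) (int m)" by simp
  then have "coprime (r ^ p) (int m)" using cong_imp_coprime[OF cong_sym[OF assms(4)]] by blast
  then have cr: "coprime r (int m)" using pp by simp
  have cr1: "coprime (r - 1) (int m)" using assms(13)
    by (metis coprime_iff_gcd_eq_1 coprime_mult_left_iff)
  have all: "{u [^] (r ^ k) | k. k \<le> p - 1} \<subseteq> H" if "subgroup H G" "u \<in> H" for H
    using subgroup_int_pow_closed[OF that] by auto
  have diff: "u \<in> H" if H: "subgroup H G" and h: "u [^] (r ^ s' - r ^ s) \<in> H" for H
  proof -
    have "coprime (r ^ (s' - s) - 1) (int m)"
      using nt_coprime[OF assms(2), of "s' - s" r m] assms(4,17,18) cr1 pp by auto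
    moreover have "r ^ s' - r ^ s = r ^ s * (r ^ (s' - s) - 1)"
      using assms(17) by (simp add: algebra_simps power_add[symmetric])
    ultimately have "coprime (r ^ s' - r ^ s) (int m)" using cr by simp
    then show ?thesis using key[OF assms(1) ucar um _ H] h by blast
  qed
  have P1: "u [^] (r ^ s) \<in> M \<longrightarrow> {u [^] (r ^ k) | k. k \<le> p - 1} \<subseteq> M"
  proof
    assume "u [^] (r ^ s) \<in> M"
    moreover have "coprime (r ^ s) (int m)" using cr by simp
    ultimately have "u \<in> M" using key[OF assms(1) ucar um _ assms(14)] by blast
    then show "{u [^] (r ^ k) | k. k \<le> p - 1} \<subseteq> M" using all assms(14) by blast
  qed
  have P2: "M #> (u [^] (r ^ s)) = M #> (u [^] (r ^ s'))
            \<longrightarrow> {u [^] (r ^ k) | k. k \<le> p - 1} \<subseteq> M"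
  proof
    assume "M #> (u [^] (r ^ s)) = M #> (u [^] (r ^ s'))"
    then have "u [^] (r ^ s') \<in> M #> (u [^] (r ^ s))"
      using repr_independenceD[OF assms(14)] ucar by simp
    then have "u [^] (r ^ s') \<otimes> inv (u [^] (r ^ s)) \<in> M"
      using subgroup.rcos_module_imp[OF assms(14) assms(1)] ucar by simp
    then have "u [^] (r ^ s' - r ^ s) \<in> M" by (simp add: int_pow_diff ucar)
    then have "u \<in> M" using diff assms(14) by blast
    then show "{u [^] (r ^ k) | k. k \<le> p - 1} \<subseteq> M" using all assms(14) by blast
  qed
  have P3: "u \<noteq> \<one> \<longrightarrow> u [^] (r ^ s) \<noteq> u [^] (r ^ s')"
  proof (intro impI notI)
    assume "u \<noteq> \<one>" "u [^] (r ^ s) = u [^] (r ^ s')"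
    then have "u [^] (r ^ s' - r ^ s) \<in> {\<one>}" by (simp add: int_pow_diff ucar)
    then have "u \<in> {\<one>}" using diff triv_subgroup by blast
    with \<open>u \<noteq> \<one>\<close> show False by simp
  qed
  show ?thesis using P1 P2 P3 by blast
qed

end
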